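(* Let $n\geq 1$ and let $a$ and $b_j,c_j,d_j$, $j=1,\dots,n$, be (nonzero complex) parameters such that the product $b_jc_jd_j$ is independent of $j$. Put $e=a^2/(b_jc_jd_j)$ (which is then independent of $j$). Then $$ \det_{1\leq j,k\leq n}\left(\frac{(b_j,c_j,d_j)_{k-1}}{(a/b_j,a/c_j,a/d_j)_{k-1}} \right) =\left(\frac{a}{e}\right)^{\binom n2}\prod_{j=2}^n \frac{(aq^{j-2})_{j-1}}{(eq^{j-2})_{j-1}} \det_{1\leq j,k\leq n}\left(\frac{(a/b_jc_j,\,a/b_jd_j,\,a/c_jd_j)_{k-1}} {(a/b_j,a/c_j,a/d_j)_{k-1}}\right). $$
   Context: Fix complex numbers $p,q$ with $|p|<1$. Define $\theta(x)=\prod_{j=0}^\infty(1-p^jx)(1-p^{j+1}/x)$ for $x\neq 0$, the elliptic shifted factorial $(a)_k=\theta(a)\theta(aq)\cdots\theta(aq^{k-1})$ (with $(a)_0=1$), and $(a_1,\dots,a_m)_k=(a_1)_k\cdots(a_m)_k$. Expressions such as $a/b_jc_j$ mean $a/(b_jc_j)$. The identity is understood for parameters where all denominators are nonzero. *)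

theory Defs
  imports "HOL-Analysis.Infinite_Products" "Jordan_Normal_Form.Determinant"
begin

definition theta :: "complex \<Rightarrow> complex \<Rightarrow> complex" where
  "theta p x = (\<Prod>j. (1 - p ^ j * x) * (1 - p ^ (j + 1) / x))"

definition eshift :: "complex \<Rightarrow> complex \<Rightarrow> complex \<Rightarrow> nat \<Rightarrow> complex" where
  "eshift p q a k = (\<Prod>i<k. theta p (a * q ^ i))"

end

theory Submission
  imports "HOL-Complex_Analysis.Complex_Analysis" Defs
begin

definition pA :: "complex \<Rightarrow> complex \<Rightarrow> complex" where
  "pA p x = (\<Prod>j. 1 - p ^ j * x)"

lemma pA_has_prod:
  assumes "norm p < 1"
  shows "(\<lambda>j. 1 - p ^ j * x) has_prod pA p x"
proof -
  have "summable (\<lambda>j. norm ((1 - p ^ j * x) - 1))"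
  proof -
    have "summable (\<lambda>j. norm p ^ j * norm x)"
      using assms by (intro summable_mult2 summable_geometric) auto
    then show ?thesis by (simp add: norm_mult norm_power)
  qed
  then have "abs_convergent_prod (\<lambda>j. 1 - p ^ j * x)"
    by (rule summable_imp_abs_convergent_prod)
  then have "convergent_prod (\<lambda>j. 1 - p ^ j * x)"
    by (rule abs_convergent_prod_imp_convergent_prod)
  then show ?thesis unfolding pA_def by (simp add: convergent_prod_has_prod_iff)
qed

lemma theta_pA:
  assumes "norm p < 1"
  shows "theta p x = pA p x * pA p (p / x)"
proof -
  have "(\<lambda>j. (1 - p ^ j * x) * (1 - p ^ j * (p / x))) has_prod (pA p x * pA p (p / x))"
    by (intro has_prod_mult pA_has_prod assms)
  moreover have "(\<lambda>j. (1 - p ^ j * x) * (1 - p ^ j * (p / x))) = (\<lambda>j. (1 - p ^ j * x) * (1 - p ^ (j + 1) / x))"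
  proof
    fix j
    have "p ^ j * (p / x) = p ^ (j + 1) / x" by (simp add: power_Suc2)
    then show "(1 - p ^ j * x) * (1 - p ^ j * (p / x)) = (1 - p ^ j * x) * (1 - p ^ (j + 1) / x)" by simp
  qed
  ultimately have "(\<lambda>j. (1 - p ^ j * x) * (1 - p ^ (j + 1) / x)) has_prod (pA p x * pA p (p / x))"
    by simp
  then show ?thesis unfolding theta_def by (rule has_prod_unique[symmetric])
qed

lemma pA_shift:
  assumes "norm p < 1"
  shows "pA p x = (1 - x) * pA p (p * x)"
proof -
  have "(\<lambda>j. 1 - p ^ (Suc j) * x) = (\<lambda>j. 1 - p ^ j * (p * x))"
    by (simp add: mult.assoc mult.left_commute)
  then have "(\<lambda>j. 1 - p ^ (Suc j) * x) has_prod pA p (p * x)"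
    using pA_has_prod[OF assms, of "p * x"] by simp
  then have "(\<lambda>j. 1 - p ^ j * x) has_prod (pA p (p * x) * (1 - p ^ 0 * x))"
    by (rule has_prod_Suc_imp[where f = "\<lambda>j. 1 - p ^ j * x"])
  then have "pA p (p * x) * (1 - p ^ 0 * x) = pA p x"
    using pA_has_prod[OF assms, of x] by (rule has_prod_unique2)
  then show ?thesis by (simp add: mult.commute)
qed

lemma theta_split:
  assumes "norm p < 1"
  shows "theta p x = (1 - x) * (pA p (p * x) * pA p (p / x))"
  unfolding theta_pA[OF assms] by (subst pA_shift[OF assms, of x]) (rule mult.assoc)

lemma aux_inv: "(x::complex) \<noteq> 0 \<Longrightarrow> (1 - 1/x) * (a * b) = - ((1 - x) * (b * a)) / x"
  by (simp add: field_simps)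

lemma theta_inv:
  assumes "norm p < 1" "x \<noteq> 0"
  shows "theta p (1 / x) = - theta p x / x"
proof -
  have "theta p (1 / x) = (1 - 1 / x) * (pA p (p * (1/x)) * pA p (p / (1/x)))"
    by (rule theta_split[OF assms(1)])
  also have "\<dots> = (1 - 1 / x) * (pA p (p / x) * pA p (p * x))" by simp
  also have "\<dots> = - ((1 - x) * (pA p (p * x) * pA p (p / x))) / x"
    by (rule aux_inv[OF assms(2)])
  finally show ?thesis using theta_split[OF assms(1), of x] by simp
qed

lemma theta_mulp:
  assumes "norm p < 1" "x \<noteq> 0" "p \<noteq> 0"
  shows "theta p (p * x) = - theta p x / x"
proof -
  have "theta p (p * x) = pA p (p * x) * pA p (p / (p * x))" by (rule theta_pA[OF assms(1)])
  also have "p / (p * x) = 1 / x" using assms by simp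
  also have "pA p (p * x) * pA p (1 / x) = theta p (1 / x)"
    using theta_pA[OF assms(1), of "1/x"] by simp
  finally show ?thesis using theta_inv[OF assms(1,2)] by simp
qed

lemma theta_divp:
  assumes "norm p < 1" "x \<noteq> 0" "p \<noteq> 0"
  shows "theta p (x / p) = - (x / p) * theta p x"
proof -
  have "theta p x = theta p (p * (x / p))" using assms by simp
  also have "\<dots> = - theta p (x / p) / (x / p)" using assms by (intro theta_mulp) auto
  finally have "theta p x = - theta p (x / p) / (x / p)" .
  then have "theta p (x / p) = - (x / p) * theta p x" using assms by (simp add: field_simps)
  then show ?thesis .
qed

lemma theta_one: "norm p < 1 \<Longrightarrow> theta p 1 = 0"
  using theta_split[of p 1] by simp

lemma pA_eq_0_iff:
  assumes "norm p < 1"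
  shows "pA p x = 0 \<longleftrightarrow> (\<exists>j. p ^ j * x = 1)"
proof -
  have e: "\<And>j. ((0::complex) = 1 - p ^ j * x) = (p ^ j * x = 1)" by auto
  show ?thesis using has_prod_eq_0_iff[OF pA_has_prod[OF assms, of x]] by (simp add: image_iff e)
qed

lemma theta_p0: "theta 0 x = 1 - x"
proof -
  have "pA 0 y = 1 - y" for y
  proof -
    have "(\<lambda>j. if j = 0 then 1 - y else 1) has_prod (1 - y)"
      using has_prod_single[of 0 "\<lambda>_. 1 - y"] by simp
    moreover have "(\<lambda>j. 1 - (0::complex) ^ j * y) = (\<lambda>j. if j = 0 then 1 - y else 1)"
      by (auto simp: fun_eq_iff)
    ultimately have "(\<lambda>j. 1 - (0::complex) ^ j * y) has_prod (1 - y)" by simp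
    moreover have "(\<lambda>j. 1 - (0::complex) ^ j * y) has_prod pA 0 y" by (rule pA_has_prod) simp
    ultimately show ?thesis by (metis has_prod_unique2)
  qed
  then show ?thesis using theta_pA[of 0 x] by simp
qed

lemma pA_ulim:
  assumes "norm p < 1"
  shows "uniform_limit (cball x 1) (\<lambda>n y. \<Prod>j<n. 1 - p ^ j * y) (pA p) sequentially"
proof -
  have uc: "uniformly_convergent_on (cball x 1) (\<lambda>N y. \<Prod>j<N. 1 - p ^ j * y)"
  proof (rule uniformly_convergent_on_prod')
    show "continuous_on (cball x 1) (\<lambda>y. 1 - p ^ n * y)" for n
      by (intro continuous_intros)
    show "compact (cball x 1)" by simp
    show "uniformly_convergent_on (cball x 1) (\<lambda>N y. \<Sum>n<N. norm (1 - p ^ n * y - 1))"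
    proof (rule Weierstrass_m_test'[where M = "\<lambda>n. norm p ^ n * (norm x + 1)"])
      fix n y assume y: "y \<in> cball x 1"
      have "norm y \<le> norm x + 1" using y norm_triangle_ineq2[of y x]
        by (auto simp: dist_norm norm_minus_commute)
      then have "norm p ^ n * norm y \<le> norm p ^ n * (norm x + 1)"
        by (intro mult_left_mono) auto
      then show "norm (norm (1 - p ^ n * y - 1)) \<le> norm p ^ n * (norm x + 1)"
        by (simp add: norm_mult norm_power)
    next
      show "summable (\<lambda>n. norm p ^ n * (norm x + 1))"
        using assms by (intro summable_mult2 summable_geometric) auto
    qed
  qed
  then have ul: "uniform_limit (cball x 1) (\<lambda>N y. \<Prod>j<N. 1 - p ^ j * y) (\<lambda>y. lim (\<lambda>N. \<Prod>j<N. 1 - p ^ j * y)) sequentially"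
    by (simp add: uniformly_convergent_uniform_limit_iff)
  have "lim (\<lambda>N. \<Prod>j<N. 1 - p ^ j * y) = pA p y" for y
  proof -
    have "convergent_prod (\<lambda>j. 1 - p ^ j * y)"
      using pA_has_prod[OF assms, of y] by (simp add: has_prod_iff)
    then have "(\<lambda>n. \<Prod>j\<le>n. 1 - p ^ j * y) \<longlonglongrightarrow> pA p y"
      unfolding pA_def by (rule convergent_prod_LIMSEQ)
    then have "(\<lambda>n. \<Prod>j<n. 1 - p ^ j * y) \<longlonglongrightarrow> pA p y"
      by (simp add: LIMSEQ_lessThan_iff_atMost)
    then show ?thesis by (rule limI)
  qed
  with ul show ?thesis by simp
qed

lemma pA_holo:
  assumes "norm p < 1"
  shows "pA p holomorphic_on UNIV"
proof (rule holomorphic_uniform_sequence[where f = "\<lambda>n y. \<Prod>j<n. 1 - p ^ j * y"])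
  show "open (UNIV :: complex set)" by simp
  show "(\<lambda>y. \<Prod>j<n. 1 - p ^ j * y) holomorphic_on UNIV" for n
    by (intro holomorphic_intros)
  show "\<exists>d>0. cball x d \<subseteq> UNIV \<and> uniform_limit (cball x d) (\<lambda>n y. \<Prod>j<n. 1 - p ^ j * y) (pA p) sequentially" for x
    using pA_ulim[OF assms, of x] by (intro exI[of _ 1]) auto
qed

lemma pA_holo_comp:
  assumes "norm p < 1" "f holomorphic_on S"
  shows "(\<lambda>z. pA p (f z)) holomorphic_on S"
  using holomorphic_on_compose_gen[OF assms(2) pA_holo[OF assms(1)]] by (simp add: o_def)

lemma theta_holo_comp:
  assumes "norm p < 1" "f holomorphic_on S" "\<And>z. z \<in> S \<Longrightarrow> f z \<noteq> 0"
  shows "(\<lambda>z. theta p (f z)) holomorphic_on S"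
proof -
  have "(\<lambda>z. pA p (f z) * pA p (p / f z)) holomorphic_on S"
    by (intro holomorphic_intros pA_holo_comp assms(1,2)) (use assms(3) in auto)
  then show ?thesis by (simp add: theta_pA[OF assms(1)])
qed

lemma theta_holo:
  assumes "norm p < 1"
  shows "theta p holomorphic_on (- {0})"
  using theta_holo_comp[OF assms, of "\<lambda>z. z" "-{0}"] by simp

lemma theta_cont_comp:
  assumes "norm p < 1" "continuous_on S f" "\<And>z. z \<in> S \<Longrightarrow> f z \<noteq> 0"
  shows "continuous_on S (\<lambda>z. theta p (f z))"
proof -
  have "continuous_on (-{0}) (theta p)"
    using theta_holo[OF assms(1)] by (rule holomorphic_on_imp_continuous_on)
  then show ?thesis by (rule continuous_on_compose2[OF _ assms(2)]) (use assms(3) in auto)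
qed

lemma theta_zero_iff:
  assumes p: "norm p < 1" "p \<noteq> 0" and x: "x \<noteq> 0"
  shows "theta p x = 0 \<longleftrightarrow> (\<exists>k::int. x = p powi k)"
proof
  assume "theta p x = 0"
  then have "pA p x = 0 \<or> pA p (p / x) = 0" by (simp add: theta_pA[OF p(1)])
  then show "\<exists>k::int. x = p powi k"
  proof
    assume "pA p x = 0"
    then obtain j where j: "p ^ j * x = 1" using pA_eq_0_iff[OF p(1)] by blast
    have "x = inverse (p ^ j)" using j p(2) by (simp add: field_simps)
    also have "\<dots> = p powi (- int j)" by (simp add: power_int_minus)
    finally show ?thesis by blast
  next
    assume "pA p (p / x) = 0"
    then obtain j where j: "p ^ j * (p / x) = 1" using pA_eq_0_iff[OF p(1)] by blast
    have "x = p ^ (Suc j)" using j x by (simp add: field_simps)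
    also have "\<dots> = p powi (int (Suc j))" by (rule power_int_of_nat[symmetric])
    finally show ?thesis by blast
  qed
next
  assume "\<exists>k::int. x = p powi k"
  then obtain k :: int where k: "x = p powi k" by blast
  show "theta p x = 0"
  proof (cases "k \<ge> 0")
    case True
    then obtain n where n: "k = int n" using nonneg_eq_int by blast
    show ?thesis
    proof (cases n)
      case 0
      then show ?thesis using k n theta_one[OF p(1)] by simp
    next
      case (Suc j)
      then have "x = p powi (int (Suc j))" using k n by simp
      then have "x = p ^ Suc j" by (simp only: power_int_of_nat)
      then have "p ^ j * (p / x) = 1" using p(2) by simp
      then have "pA p (p / x) = 0" using pA_eq_0_iff[OF p(1)] by blast
      then show ?thesis by (simp add: theta_pA[OF p(1)])
    qed
  next
    case False
    define n where "n = nat (- k)"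
    have n: "k = - int n" using False unfolding n_def by simp
    then have "x = inverse (p ^ n)" using k by (simp add: power_int_minus)
    then have "p ^ n * x = 1" using p(2) by simp
    then have "pA p x = 0" using pA_eq_0_iff[OF p(1)] by blast
    then show ?thesis by (simp add: theta_pA[OF p(1)])
  qed
qed

lemma theta_has_deriv:
  assumes "norm p < 1" "x \<noteq> 0"
  shows "(theta p has_field_derivative deriv (theta p) x) (at x)"
  by (rule holomorphic_derivI[OF theta_holo[OF assms(1)] open_Compl[OF closed_singleton]]) (use assms(2) in simp)

lemma theta_deriv_mulp:
  assumes p: "norm p < 1" "p \<noteq> 0" and x0: "x0 \<noteq> 0" and z: "theta p x0 = 0"
  shows "deriv (theta p) (p * x0) = - deriv (theta p) x0 / (p * x0)"
proof -
  define D where "D = deriv (theta p) x0"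
  define E where "E = deriv (theta p) (p * x0)"
  have dD: "(theta p has_field_derivative D) (at x0)"
    unfolding D_def by (rule theta_has_deriv[OF p(1) x0])
  have dE: "(theta p has_field_derivative E) (at (p * x0))"
    unfolding E_def by (rule theta_has_deriv[OF p(1)]) (use p x0 in simp)
  have c1: "((\<lambda>x. theta p (p * x)) has_field_derivative E * p) (at x0)"
    using DERIV_chain2[OF dE DERIV_cmult_Id[of p x0 UNIV]] .
  have "((\<lambda>x. - theta p x / x) has_field_derivative (- D * x0 - (- theta p x0) * 1) / (x0 * x0)) (at x0)"
    by (rule DERIV_divide[OF DERIV_minus[OF dD] DERIV_ident x0])
  then have c2: "((\<lambda>x. - theta p x / x) has_field_derivative (- D / x0)) (at x0)"
    using z x0 by (simp add: field_simps)
  have c3: "((\<lambda>x. theta p (p * x)) has_field_derivative (- D / x0)) (at x0)"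
  proof (rule has_field_derivative_transform_within_open[OF c2, of "-{0}"])
    show "open (- {0::complex})" by (rule open_Compl[OF closed_singleton])
    show "x0 \<in> - {0}" using x0 by simp
    show "- theta p x / x = theta p (p * x)" if "x \<in> - {0}" for x
      using theta_mulp[OF p(1) _ p(2), of x] that by simp
  qed
  have "E * p = - D / x0" by (rule DERIV_unique[OF c1 c3])
  then have "E = - D / (p * x0)" using p(2) x0 by (simp add: field_simps)
  then show ?thesis unfolding D_def E_def .
qed

lemma pA_p_nz:
  assumes "norm p < 1"
  shows "pA p p \<noteq> 0"
proof
  assume "pA p p = 0"
  then obtain j where j: "p ^ j * p = 1" using pA_eq_0_iff[OF assms] by blast
  then have "norm (p ^ Suc j) = 1" by (simp add: mult.commute)
  moreover have "norm (p ^ Suc j) < 1"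
  proof -
    have "norm p ^ j \<le> 1" using assms by (intro power_le_one) auto
    then have "norm p * norm p ^ j \<le> norm p * 1" by (intro mult_left_mono) auto
    then show ?thesis using assms by (simp add: norm_mult norm_power)
  qed
  ultimately show False by simp
qed

lemma theta_deriv_one:
  assumes p: "norm p < 1"
  shows "deriv (theta p) 1 \<noteq> 0"
proof -
  define R where "R = (\<lambda>x. pA p (p * x) * pA p (p / x))"
  have Rh: "R holomorphic_on (-{0})"
    unfolding R_def by (intro holomorphic_intros pA_holo_comp p) auto
  have dR: "(R has_field_derivative deriv R 1) (at 1)"
    by (rule holomorphic_derivI[OF Rh open_Compl[OF closed_singleton]]) simp
  have th: "theta p = (\<lambda>x. (1 - x) * R x)"
    unfolding R_def by (rule ext) (rule theta_split[OF p])
  have "((\<lambda>x. (1 - x) * R x) has_field_derivative (-1) * R 1 + deriv R 1 * (1 - 1)) (at 1)"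
    by (rule DERIV_mult[OF _ dR]) (auto intro!: derivative_eq_intros)
  then have "deriv (theta p) 1 = - R 1" unfolding th by (simp add: DERIV_imp_deriv)
  moreover have "R 1 \<noteq> 0" unfolding R_def using pA_p_nz[OF p] by simp
  ultimately show ?thesis by simp
qed

lemma theta_deriv_powi:
  assumes p: "norm p < 1" "p \<noteq> 0"
  shows "deriv (theta p) (p powi k) \<noteq> 0"
proof (induction k rule: int_induct[where k = 0])
  case base
  then show ?case using theta_deriv_one[OF p(1)] by simp
next
  case (step1 i)
  have x0: "p powi i \<noteq> 0" using p by simp
  have z: "theta p (p powi i) = 0" using theta_zero_iff[OF p x0] by blast
  have "p powi (i + 1) = p * p powi i" using p by (simp add: power_int_add_1')
  then show ?case using theta_deriv_mulp[OF p x0 z] step1.IH x0 p by simp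
next
  case (step2 i)
  have x0: "p powi (i - 1) \<noteq> 0" using p by simp
  have z: "theta p (p powi (i - 1)) = 0" using theta_zero_iff[OF p x0] by blast
  have "p powi i = p * p powi (i - 1)" using p power_int_add_1'[of p "i - 1"] by simp
  then have "deriv (theta p) (p * p powi (i - 1)) \<noteq> 0" using step2.IH by simp
  then show ?case using theta_deriv_mulp[OF p x0 z] by auto
qed

lemma theta_simple_zero:
  assumes p: "norm p < 1" "p \<noteq> 0" and x0: "x0 \<noteq> 0" and z: "theta p x0 = 0"
  shows "deriv (theta p) x0 \<noteq> 0"
  using theta_zero_iff[OF p x0] z theta_deriv_powi[OF p] by blast

lemma open_nz: "open (- {0::complex})" by (rule open_Compl[OF closed_singleton])

lemma ev_nonzero_simple:
  assumes G: "G holomorphic_on (- {0})" and z0: "z0 \<noteq> 0" and Gz: "G z0 = 0" and d: "deriv G z0 \<noteq> 0"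
  shows "eventually (\<lambda>y. G y \<noteq> 0) (at z0)"
proof -
  have "(G has_field_derivative deriv G z0) (at z0)"
    by (rule holomorphic_derivI[OF G open_nz]) (use z0 in simp)
  then have "((\<lambda>y. (G y - G z0) / (y - z0)) \<longlongrightarrow> deriv G z0) (at z0)"
    by (simp add: has_field_derivative_iff)
  then have "eventually (\<lambda>y. (G y - G z0) / (y - z0) \<noteq> 0) (at z0)"
    using d by (rule tendsto_imp_eventually_ne)
  then show ?thesis by eventually_elim (use Gz in auto)
qed

lemma ev_nonzero_all:
  assumes G: "G holomorphic_on (- {0})" and z0: "z0 \<noteq> 0"
    and zer: "G z0 = 0 \<Longrightarrow> deriv G z0 \<noteq> 0"
  shows "eventually (\<lambda>y. G y \<noteq> 0) (at z0)"
proof (cases "G z0 = 0")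
  case True
  then show ?thesis using ev_nonzero_simple[OF G z0 True zer[OF True]] by simp
next
  case False
  have "continuous_on (- {0}) G" using G by (rule holomorphic_on_imp_continuous_on)
  then have "isCont G z0" using z0 open_nz continuous_on_eq_continuous_at by blast
  then have "(G \<longlongrightarrow> G z0) (at z0)" by (simp add: isCont_def)
  then show ?thesis using False by (rule tendsto_imp_eventually_ne)
qed

lemma quot_limit:
  assumes F: "F holomorphic_on (- {0})" and G: "G holomorphic_on (- {0})"
    and z0: "z0 \<noteq> 0" and Fz: "F z0 = 0" and Gz: "G z0 = 0" and d: "deriv G z0 \<noteq> 0"
  shows "((\<lambda>y. F y / G y) \<longlongrightarrow> deriv F z0 / deriv G z0) (at z0)"
proof -
  have "(G has_field_derivative deriv G z0) (at z0)"
    by (rule holomorphic_derivI[OF G open_nz]) (use z0 in simp)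
  then have g: "((\<lambda>y. (G y - G z0) / (y - z0)) \<longlongrightarrow> deriv G z0) (at z0)"
    by (simp add: has_field_derivative_iff)
  have "(F has_field_derivative deriv F z0) (at z0)"
    by (rule holomorphic_derivI[OF F open_nz]) (use z0 in simp)
  then have f: "((\<lambda>y. (F y - F z0) / (y - z0)) \<longlongrightarrow> deriv F z0) (at z0)"
    by (simp add: has_field_derivative_iff)
  have "((\<lambda>y. ((F y - F z0) / (y - z0)) / ((G y - G z0) / (y - z0))) \<longlongrightarrow> deriv F z0 / deriv G z0) (at z0)"
    by (rule tendsto_divide[OF f g d])
  moreover have "eventually (\<lambda>y. ((F y - F z0) / (y - z0)) / ((G y - G z0) / (y - z0)) = F y / G y) (at z0)"
  proof -
    have "eventually (\<lambda>y. y \<noteq> z0) (at z0)" by (simp add: eventually_at_filter)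
    then show ?thesis
    proof eventually_elim
      case (elim y)
      then have "y - z0 \<noteq> 0" by simp
      then show ?case using Fz Gz by (simp add: divide_simps)
    qed
  qed
  ultimately show ?thesis by (rule Lim_transform_eventually)
qed

lemma eventually_ball:
  assumes "eventually P (at (z0::complex))"
  obtains d where "d > 0" "\<And>y. y \<noteq> z0 \<Longrightarrow> dist y z0 < d \<Longrightarrow> P y"
  using assms unfolding eventually_at by auto

definition hq :: "(complex \<Rightarrow> complex) \<Rightarrow> (complex \<Rightarrow> complex) \<Rightarrow> complex \<Rightarrow> complex" where
  "hq F G z = (if G z = 0 then deriv F z / deriv G z else F z / G z)"

lemma hq_holo:
  assumes F: "F holomorphic_on (- {0})" and G: "G holomorphic_on (- {0})"
    and zer: "\<And>z. z \<noteq> 0 \<Longrightarrow> G z = 0 \<Longrightarrow> F z = 0 \<and> deriv G z \<noteq> 0"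
  shows "hq F G holomorphic_on (- {0})"
proof -
  have "hq F G analytic_on (- {0})"
    unfolding analytic_on_def
  proof
    fix z0 :: complex assume "z0 \<in> - {0}"
    then have z0: "z0 \<noteq> 0" by simp
    have ev: "eventually (\<lambda>y. G y \<noteq> 0) (at z0)"
      by (rule ev_nonzero_all[OF G z0]) (use zer[OF z0] in blast)
    obtain d where d: "d > 0" "\<And>y. y \<noteq> z0 \<Longrightarrow> dist y z0 < d \<Longrightarrow> G y \<noteq> 0"
      using eventually_ball[OF ev] by blast
    define e where "e = min d (norm z0)"
    have e: "e > 0" unfolding e_def using d z0 by simp
    have sub: "ball z0 e \<subseteq> - {0}"
    proof
      fix y assume "y \<in> ball z0 e"
      then have "dist z0 y < norm z0" unfolding e_def by simp
      then show "y \<in> - {0}" by (auto simp: dist_norm)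
    qed
    have nz: "G y \<noteq> 0" if "y \<in> ball z0 e - {z0}" for y
      using that d(2)[of y] unfolding e_def by (auto simp: dist_commute)
    have h1: "(\<lambda>y. F y / G y) holomorphic_on (ball z0 e - {z0})"
      by (intro holomorphic_intros holomorphic_on_subset[OF F] holomorphic_on_subset[OF G])
         (use sub nz in auto)
    show "\<exists>e>0. hq F G holomorphic_on ball z0 e"
    proof (cases "G z0 = 0")
      case True
      have lim: "((\<lambda>y. F y / G y) \<longlongrightarrow> deriv F z0 / deriv G z0) (at z0)"
        using quot_limit[OF F G z0 _ True] zer[OF z0 True] by blast
      have "(\<lambda>y. if y = z0 then deriv F z0 / deriv G z0 else F y / G y) holomorphic_on ball z0 e"
        by (rule removable_singularity[OF h1 open_ball lim])
      moreover have "(if y = z0 then deriv F z0 / deriv G z0 else F y / G y) = hq F G y" if "y \<in> ball z0 e" for y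
        using that nz True unfolding hq_def by auto
      ultimately have "hq F G holomorphic_on ball z0 e" by (rule holomorphic_transform)
      then show ?thesis using e by blast
    next
      case False
      have "(\<lambda>y. F y / G y) holomorphic_on ball z0 e"
        by (intro holomorphic_intros holomorphic_on_subset[OF F] holomorphic_on_subset[OF G])
           (use sub nz False in auto)
      moreover have "F y / G y = hq F G y" if "y \<in> ball z0 e" for y
        using that nz False unfolding hq_def by (cases "y = z0") auto
      ultimately have "hq F G holomorphic_on ball z0 e" by (rule holomorphic_transform)
      then show ?thesis using e by blast
    qed
  qed
  then show ?thesis by (simp add: analytic_on_open open_nz)
qed

lemma hq_step:
  assumes p: "p \<noteq> 0" and mF: "\<And>z. z \<noteq> 0 \<Longrightarrow> F (p * z) = m z * F z"
    and mG: "\<And>z. z \<noteq> 0 \<Longrightarrow> G (p * z) = m z * G z" and mnz: "\<And>z. z \<noteq> 0 \<Longrightarrow> m z \<noteq> 0"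
    and y: "y \<noteq> 0" and Gy: "G y \<noteq> 0"
  shows "hq F G (p * y) = hq F G y"
proof -
  have "G (p * y) \<noteq> 0" using mG[OF y] mnz[OF y] Gy by simp
  then have "hq F G (p * y) = F (p * y) / G (p * y)" unfolding hq_def by simp
  also have "\<dots> = (m y * F y) / (m y * G y)" using mF[OF y] mG[OF y] by simp
  also have "\<dots> = F y / G y" using mnz[OF y] by simp
  also have "\<dots> = hq F G y" using Gy unfolding hq_def by simp
  finally show ?thesis .
qed

lemma hq_periodic:
  assumes F: "F holomorphic_on (- {0})" and G: "G holomorphic_on (- {0})"
    and zer: "\<And>z. z \<noteq> 0 \<Longrightarrow> G z = 0 \<Longrightarrow> F z = 0 \<and> deriv G z \<noteq> 0"
    and p: "p \<noteq> 0" and mF: "\<And>z. z \<noteq> 0 \<Longrightarrow> F (p * z) = m z * F z"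
    and mG: "\<And>z. z \<noteq> 0 \<Longrightarrow> G (p * z) = m z * G z" and mnz: "\<And>z. z \<noteq> 0 \<Longrightarrow> m z \<noteq> 0"
    and z: "z \<noteq> 0"
  shows "hq F G (p * z) = hq F G z"
proof (cases "G z = 0")
  case False
  show ?thesis using p mF mG mnz z False by (rule hq_step)
next
  case True
  have hc: "continuous_on (- {0}) (hq F G)"
    using hq_holo[OF F G zer] by (rule holomorphic_on_imp_continuous_on)
  have hc': "\<forall>x\<in>-{0}. isCont (hq F G) x"
    using hc by (simp add: continuous_on_eq_continuous_at[OF open_nz])
  have "p * z \<in> - {0}" using p z by simp
  with hc' have c1: "isCont (hq F G) (p * z)" by (rule bspec)
  have "z \<in> - {0}" using z by simp
  with hc' have c0: "isCont (hq F G) z" by (rule bspec)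
  have "isCont (\<lambda>y. hq F G (p * y)) z"
    by (rule isCont_o2[where f="\<lambda>y. p * y", OF _ c1]) simp
  then have l1: "((\<lambda>y. hq F G (p * y)) \<longlongrightarrow> hq F G (p * z)) (at z)"
    by (simp add: isCont_def)
  have ev1: "eventually (\<lambda>y. G y \<noteq> 0) (at z)"
    by (rule ev_nonzero_all[OF G z]) (use zer[OF z] in blast)
  have ev2: "eventually (\<lambda>y. y \<noteq> 0) (at z)"
  proof -
    have "((\<lambda>y. y) \<longlongrightarrow> z) (at z)" by simp
    then show ?thesis using z by (rule tendsto_imp_eventually_ne)
  qed
  have "eventually (\<lambda>y. hq F G (p * y) = hq F G y) (at z)"
    using ev1 ev2 proof eventually_elim
    case (elim y)
    show ?case using p mF mG mnz elim(2) elim(1) by (rule hq_step)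
  qed
  with l1 have "(hq F G \<longlongrightarrow> hq F G (p * z)) (at z)"
    by (rule Lim_transform_eventually)
  moreover have "(hq F G \<longlongrightarrow> hq F G z) (at z)" using c0 by (simp add: isCont_def)
  ultimately show ?thesis by (rule tendsto_unique[OF trivial_limit_at])
qed

lemma annulus_rep:
  fixes p z :: complex
  assumes p: "0 < norm p" "norm p < 1" and z: "z \<noteq> 0"
  shows "\<exists>w n. norm p \<le> norm w \<and> norm w \<le> 1 \<and> (z = p ^ n * w \<or> w = p ^ n * z)"
proof -
  define r where "r = norm p"
  define t where "t = norm z"
  have r: "0 < r" "r < 1" using p unfolding r_def by auto
  have t: "0 < t" using z unfolding t_def by simp
  show ?thesis
  proof (cases "t \<le> 1")
    case True
    have ex: "\<exists>n. r ^ n < t" using real_arch_pow_inv[OF t r(2)] .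
    define N where "N = (LEAST n. r ^ n < t)"
    have N1: "r ^ N < t" unfolding N_def by (rule LeastI_ex[OF ex])
    have "N \<noteq> 0"
    proof
      assume "N = 0"
      then show False using N1 True by simp
    qed
    then obtain M where M: "N = Suc M" by (cases N) auto
    have "\<not> r ^ M < t" unfolding N_def
      by (rule not_less_Least) (use M N_def in simp)
    then have M1: "t \<le> r ^ M" by simp
    have rM: "r ^ M > 0" using r by simp
    define w where "w = z / p ^ M"
    have pM: "p ^ M \<noteq> 0" using p by simp
    have nw: "norm w = t / r ^ M" unfolding w_def t_def r_def by (simp add: norm_divide norm_power)
    have "norm w \<le> 1" using M1 rM nw by simp
    moreover have "r \<le> norm w"
    proof -
      have "r * r ^ M < t" using N1 M by simp
      then have "r < t / r ^ M" using rM by (simp add: field_simps)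
      then show ?thesis using nw by simp
    qed
    moreover have "z = p ^ M * w" unfolding w_def using pM by simp
    ultimately show ?thesis unfolding r_def by blast
  next
    case False
    have it: "0 < 1 / t" using t by simp
    have ex: "\<exists>n. r ^ n < 1 / t" using real_arch_pow_inv[OF it r(2)] .
    define N where "N = (LEAST n. r ^ n < 1 / t)"
    have N1: "r ^ N < 1 / t" unfolding N_def by (rule LeastI_ex[OF ex])
    have "N \<noteq> 0"
    proof
      assume "N = 0"
      then show False using N1 False t by (simp add: field_simps)
    qed
    then obtain M where M: "N = Suc M" by (cases N) auto
    have "\<not> r ^ M < 1 / t" unfolding N_def
      by (rule not_less_Least) (use M N_def in simp)
    then have M1: "1 \<le> r ^ M * t" using t by (simp add: field_simps)
    define w where "w = p ^ Suc M * z"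
    have nw: "norm w = r * r ^ M * t" unfolding w_def t_def r_def by (simp add: norm_mult norm_power)
    have "norm w < 1"
    proof -
      have "r ^ Suc M * t < 1" using N1 M t by (simp add: field_simps)
      then show ?thesis using nw by simp
    qed
    moreover have "r \<le> norm w"
    proof -
      have "r * 1 \<le> r * (r ^ M * t)" using M1 r by (intro mult_left_mono) auto
      then show ?thesis using nw by (simp add: mult.assoc)
    qed
    moreover have "w = p ^ Suc M * z" by (simp add: w_def)
    ultimately show ?thesis unfolding r_def by (intro exI[of _ w] exI[of _ "Suc M"]) simp
  qed
qed

lemma hq_pow:
  assumes F: "F holomorphic_on (- {0})" and G: "G holomorphic_on (- {0})"
    and zer: "\<And>z. z \<noteq> 0 \<Longrightarrow> G z = 0 \<Longrightarrow> F z = 0 \<and> deriv G z \<noteq> 0"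
    and p: "p \<noteq> 0" and mF: "\<And>z. z \<noteq> 0 \<Longrightarrow> F (p * z) = m z * F z"
    and mG: "\<And>z. z \<noteq> 0 \<Longrightarrow> G (p * z) = m z * G z" and mnz: "\<And>z. z \<noteq> 0 \<Longrightarrow> m z \<noteq> 0"
    and z: "z \<noteq> 0"
  shows "hq F G (p ^ n * z) = hq F G z"
proof (induction n)
  case 0
  then show ?case by simp
next
  case (Suc n)
  have nz: "p ^ n * z \<noteq> 0" using p z by simp
  have "hq F G (p ^ Suc n * z) = hq F G (p * (p ^ n * z))" by (simp add: mult.assoc)
  also have "\<dots> = hq F G (p ^ n * z)"
    using F G zer p mF mG mnz nz by (rule hq_periodic)
  finally show ?case using Suc.IH by simp
qed

lemma liouville_quasi:
  fixes F G m :: "complex \<Rightarrow> complex" and p :: complex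
  assumes p: "0 < norm p" "norm p < 1"
    and F: "F holomorphic_on (- {0})" and G: "G holomorphic_on (- {0})"
    and zer: "\<And>z. z \<noteq> 0 \<Longrightarrow> G z = 0 \<Longrightarrow> F z = 0 \<and> deriv G z \<noteq> 0"
    and mF: "\<And>z. z \<noteq> 0 \<Longrightarrow> F (p * z) = m z * F z"
    and mG: "\<And>z. z \<noteq> 0 \<Longrightarrow> G (p * z) = m z * G z" and mnz: "\<And>z. z \<noteq> 0 \<Longrightarrow> m z \<noteq> 0"
  shows "\<exists>c. \<forall>z. z \<noteq> 0 \<longrightarrow> F z = c * G z"
proof -
  have p0: "p \<noteq> 0" using p by auto
  define K where "K = cball (0::complex) 1 - ball 0 (norm p)"
  have Kc: "compact K" unfolding K_def by (intro compact_diff compact_cball open_ball)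
  have Ksub: "K \<subseteq> - {0}" unfolding K_def using p by auto
  have hh: "hq F G holomorphic_on (- {0})" by (rule hq_holo[OF F G zer])
  have "continuous_on K (hq F G)"
    by (rule holomorphic_on_imp_continuous_on[OF holomorphic_on_subset[OF hh Ksub]])
  then have "compact (hq F G ` K)" using Kc by (rule compact_continuous_image)
  then have "bounded (hq F G ` K)" by (rule compact_imp_bounded)
  then obtain B where B: "\<And>w. w \<in> K \<Longrightarrow> norm (hq F G w) \<le> B"
    unfolding bounded_iff by auto
  have bnd: "norm (hq F G z) \<le> B" if z: "z \<noteq> 0" for z
  proof -
    obtain w n where w: "norm p \<le> norm w" "norm w \<le> 1" "z = p ^ n * w \<or> w = p ^ n * z"
      using annulus_rep[OF p z] by blast
    have wK: "w \<in> K" unfolding K_def using w by auto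
    have w0: "w \<noteq> 0" using w p by auto
    have "hq F G z = hq F G w"
    proof (cases "z = p ^ n * w")
      case True
      then show ?thesis using hq_pow[OF F G zer p0 mF mG mnz w0] by simp
    next
      case False
      then have "w = p ^ n * z" using w by simp
      then show ?thesis using hq_pow[OF F G zer p0 mF mG mnz z] by simp
    qed
    then show ?thesis using B[OF wK] by simp
  qed
  define k where "k = (\<lambda>w. hq F G (exp w))"
  have "k holomorphic_on UNIV"
  proof -
    have "(hq F G \<circ> exp) holomorphic_on UNIV"
      by (rule holomorphic_on_compose_gen[OF holomorphic_on_exp hh]) auto
    then show ?thesis unfolding k_def o_def .
  qed
  moreover have "bounded (range k)"
    unfolding bounded_iff k_def
  proof (intro exI[of _ B] ballI)
    fix y assume "y \<in> range (\<lambda>w. hq F G (exp w))"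
    then obtain w where "y = hq F G (exp w)" by blast
    then show "norm y \<le> B" using bnd[of "exp w"] by simp
  qed
  ultimately have "k constant_on UNIV" by (rule Liouville_theorem)
  then obtain c where c: "\<And>w. k w = c" unfolding constant_on_def by blast
  have hc: "hq F G z = c" if "z \<noteq> 0" for z
    using c[of "Ln z"] that unfolding k_def by simp
  show ?thesis
  proof (intro exI allI impI)
    fix z :: complex assume z: "z \<noteq> 0"
    show "F z = c * G z"
    proof (cases "G z = 0")
      case True
      then show ?thesis using zer[OF z] by simp
    next
      case False
      then have "F z / G z = c" using hc[OF z] unfolding hq_def by simp
      then show ?thesis using False by (simp add: field_simps)
    qed
  qed
qed

lemma theta_pair_p:
  assumes p: "norm p < 1" "p \<noteq> 0" and nz: "\<alpha> \<noteq> 0" "\<beta> \<noteq> 0" "w \<noteq> 0"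
  shows "theta p (\<alpha> * (p * w)) * theta p (\<beta> / (p * w)) = (\<beta> / (\<alpha> * p * w * w)) * (theta p (\<alpha> * w) * theta p (\<beta> / w))"
proof -
  have a: "theta p (\<alpha> * (p * w)) = - theta p (\<alpha> * w) / (\<alpha> * w)"
  proof -
    have e: "\<alpha> * (p * w) = p * (\<alpha> * w)" by (simp add: ac_simps)
    show ?thesis unfolding e by (rule theta_mulp[OF p(1) _ p(2)]) (use nz in simp)
  qed
  have b: "theta p (\<beta> / (p * w)) = - ((\<beta> / w) / p) * theta p (\<beta> / w)"
  proof -
    have e: "\<beta> / (p * w) = (\<beta> / w) / p" by simp
    show ?thesis unfolding e by (rule theta_divp[OF p(1) _ p(2)]) (use nz in simp)
  qed
  show ?thesis unfolding a b using nz p(2) by (simp add: field_simps)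
qed

lemma theta_deriv_lin:
  assumes p: "norm p < 1" and nz: "\<alpha> \<noteq> 0" "w0 \<noteq> 0"
  shows "((\<lambda>w. theta p (\<alpha> * w)) has_field_derivative deriv (theta p) (\<alpha> * w0) * \<alpha>) (at w0)"
proof -
  have d: "(theta p has_field_derivative deriv (theta p) (\<alpha> * w0)) (at (\<alpha> * w0))"
    by (rule theta_has_deriv[OF p]) (use nz in simp)
  show ?thesis using DERIV_chain2[OF d DERIV_cmult_Id[of \<alpha> w0 UNIV]] .
qed

lemma theta_deriv_inv:
  assumes p: "norm p < 1" and nz: "\<beta> \<noteq> 0" "w0 \<noteq> 0"
  shows "((\<lambda>w. theta p (\<beta> / w)) has_field_derivative deriv (theta p) (\<beta> / w0) * (- \<beta> / (w0 * w0))) (at w0)"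
proof -
  have d: "(theta p has_field_derivative deriv (theta p) (\<beta> / w0)) (at (\<beta> / w0))"
    by (rule theta_has_deriv[OF p]) (use nz in simp)
  have "((\<lambda>w. \<beta> / w) has_field_derivative (0 * w0 - \<beta> * 1) / (w0 * w0)) (at w0)"
    by (rule DERIV_divide[OF DERIV_const DERIV_ident nz(2)])
  then have e: "((\<lambda>w. \<beta> / w) has_field_derivative (- \<beta> / (w0 * w0))) (at w0)" by simp
  show ?thesis using DERIV_chain2[OF d e] .
qed

lemma theta_holo_lin:
  assumes p: "norm p < 1" and nz: "\<alpha> \<noteq> 0"
  shows "(\<lambda>w. theta p (\<alpha> * w)) holomorphic_on (- {0})"
  by (rule theta_holo_comp[OF p]) (auto intro!: holomorphic_intros simp: nz)

lemma theta_holo_inv: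
  assumes p: "norm p < 1" and nz: "\<beta> \<noteq> 0"
  shows "(\<lambda>w. theta p (\<beta> / w)) holomorphic_on (- {0})"
  by (rule theta_holo_comp[OF p]) (auto intro!: holomorphic_intros simp: nz)

lemma zero_shift:
  fixes p w :: complex and F m :: "complex \<Rightarrow> complex"
  assumes p: "p \<noteq> 0" and mF: "\<And>z. z \<noteq> 0 \<Longrightarrow> F (p * z) = m z * F z"
    and mnz: "\<And>z. z \<noteq> 0 \<Longrightarrow> m z \<noteq> 0" and w: "w \<noteq> 0" and Fw: "F w = 0"
  shows "F (p powi k * w) = 0"
proof (induction k rule: int_induct[where k = 0])
  case base
  then show ?case using Fw by simp
next
  case (step1 i)
  have nz: "p powi i * w \<noteq> 0" using p w by simp
  have e: "p powi (i + 1) * w = p * (p powi i * w)" using p by (simp add: power_int_add_1' mult.assoc)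
  show ?case unfolding e using mF[OF nz] step1.IH by simp
next
  case (step2 i)
  have nz: "p powi (i - 1) * w \<noteq> 0" using p w by simp
  have e: "p powi i * w = p * (p powi (i - 1) * w)" using p power_int_add_1'[of p "i - 1"] by (simp add: mult.assoc)
  have "F (p * (p powi (i - 1) * w)) = 0" using step2.IH unfolding e .
  then have "m (p powi (i - 1) * w) * F (p powi (i - 1) * w) = 0" using mF[OF nz] by simp
  then show ?case using mnz[OF nz] by simp
qed

lemma alg_shift:
  fixes a b e f g h i k X1 Y1 X2 Y2 X3 Y3 x1 y1 x2 y2 x3 y3 :: complex
  assumes "X1 * Y1 = k * (x1 * y1)" "X2 * Y2 = k * (x2 * y2)" "Y3 * X3 = k * (y3 * x3)"
  shows "a * X1 * b * Y1 - e * f * X2 * g * Y2 - h * X3 * i * Y3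
       = k * (a * x1 * b * y1 - e * f * x2 * g * y2 - h * x3 * i * y3)"
proof -
  have "a * X1 * b * Y1 - e * f * X2 * g * Y2 - h * X3 * i * Y3
      = a * b * (X1 * Y1) - e * f * g * (X2 * Y2) - h * i * (Y3 * X3)" by (simp add: ac_simps)
  also have "\<dots> = a * b * (k * (x1 * y1)) - e * f * g * (k * (x2 * y2)) - h * i * (k * (y3 * x3))"
    by (simp only: assms)
  also have "\<dots> = k * (a * x1 * b * y1 - e * f * x2 * g * y2 - h * x3 * i * y3)"
    by (simp add: algebra_simps)
  finally show ?thesis .
qed

lemma theta_inv_div:
  assumes p: "norm p < 1" and nz: "x \<noteq> 0" "y \<noteq> 0"
  shows "theta p (y / x) = - theta p (x / y) * (y / x)"
proof -
  have "y / x = 1 / (x / y)" by simp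
  then have "theta p (y / x) = theta p (1 / (x / y))" by simp
  also have "\<dots> = - theta p (x / y) / (x / y)" by (rule theta_inv[OF p]) (use nz in simp)
  finally show ?thesis by (simp add: field_simps)
qed

lemma R_generic:
  fixes p c u1 u2 u3 M w :: complex
  assumes p: "0 < norm p" "norm p < 1"
    and nz: "c \<noteq> 0" "u1 \<noteq> 0" "u2 \<noteq> 0" "u3 \<noteq> 0"
    and hM: "M * u1 * u2 * u3 * c = 1"
    and g1: "\<forall>k::int. M * u1 * u1 \<noteq> p powi k"
    and g2: "theta p (u1 / u2) \<noteq> 0" and g3: "theta p (1 / (u3 * c)) \<noteq> 0"
    and w: "w \<noteq> 0"
  shows "theta p (u2 / u3) * theta p (u1 * w) * theta p (u1 * c) * theta p (M * u1 / w)
       - (u1 / u2) * theta p (u1 / u3) * theta p (u2 * w) * theta p (u2 * c) * theta p (M * u2 / w)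
       - theta p (u1 / u2) * theta p ((1 / u3) / w) * theta p (1 / (u3 * c)) * theta p ((1 / (u3 * M)) * w) = 0"
proof -
  have p0: "p \<noteq> 0" and p1: "norm p < 1" using p by auto
  have M_eq: "M = 1 / (u1 * u2 * u3 * c)" using hM nz by (simp add: field_simps)
  have M0: "M \<noteq> 0" using hM by auto
  define F where "F = (\<lambda>w. theta p (u2 / u3) * theta p (u1 * w) * theta p (u1 * c) * theta p (M * u1 / w)
       - (u1 / u2) * theta p (u1 / u3) * theta p (u2 * w) * theta p (u2 * c) * theta p (M * u2 / w)
       - theta p (u1 / u2) * theta p ((1 / u3) / w) * theta p (1 / (u3 * c)) * theta p ((1 / (u3 * M)) * w))"
  define G where "G = (\<lambda>w. theta p (u1 * w) * theta p (M * u1 / w))"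
  define m where "m = (\<lambda>w. M / (p * w * w))"
  have Fh: "F holomorphic_on (- {0})"
    unfolding F_def
    by (intro holomorphic_intros theta_holo_lin theta_holo_inv p1) (use nz M0 in auto)
  have Gh: "G holomorphic_on (- {0})"
    unfolding G_def
    by (intro holomorphic_intros theta_holo_lin theta_holo_inv p1) (use nz M0 in auto)
  have mnz: "m z \<noteq> 0" if "z \<noteq> 0" for z unfolding m_def using that M0 p0 by simp
  have A1: "theta p (u1 * (p * z)) * theta p (M * u1 / (p * z)) = m z * (theta p (u1 * z) * theta p (M * u1 / z))"
    if z: "z \<noteq> 0" for z
  proof -
    have "(M * u1) / (u1 * p * z * z) = m z" unfolding m_def using nz by simp
    then show ?thesis using theta_pair_p[OF p1 p0 nz(2) _ z, of "M * u1"] M0 nz by simp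
  qed
  have A2: "theta p (u2 * (p * z)) * theta p (M * u2 / (p * z)) = m z * (theta p (u2 * z) * theta p (M * u2 / z))"
    if z: "z \<noteq> 0" for z
  proof -
    have "(M * u2) / (u2 * p * z * z) = m z" unfolding m_def using nz by simp
    then show ?thesis using theta_pair_p[OF p1 p0 nz(3) _ z, of "M * u2"] M0 nz by simp
  qed
  have A3: "theta p ((1 / (u3 * M)) * (p * z)) * theta p ((1 / u3) / (p * z)) = m z * (theta p ((1 / (u3 * M)) * z) * theta p ((1 / u3) / z))"
    if z: "z \<noteq> 0" for z
  proof -
    have "(1 / u3) / ((1 / (u3 * M)) * p * z * z) = m z" unfolding m_def using nz M0 by simp
    moreover have "theta p ((1 / (u3 * M)) * (p * z)) * theta p ((1 / u3) / (p * z))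
        = ((1 / u3) / ((1 / (u3 * M)) * p * z * z)) * (theta p ((1 / (u3 * M)) * z) * theta p ((1 / u3) / z))"
      by (rule theta_pair_p[OF p1 p0 _ _ z]) (use nz M0 in auto)
    ultimately show ?thesis by simp
  qed
  have mF: "F (p * z) = m z * F z" if z: "z \<noteq> 0" for z
    unfolding F_def by (rule alg_shift[OF A1[OF z] A2[OF z] A3[OF z]])
  have mG: "G (p * z) = m z * G z" if z: "z \<noteq> 0" for z
    unfolding G_def by (rule A1[OF z])
  have tdiv: "theta p (u2 / u1) = - theta p (u1 / u2) * (u2 / u1)"
    by (rule theta_inv_div[OF p1]) (use nz in auto)
  have E1: "F (1 / u1) = 0"
  proof -
    have e1: "u1 * (1 / u1) = 1" "u2 * (1 / u1) = u2 / u1" "M * u2 / (1 / u1) = 1 / (u3 * c)"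
      "(1 / u3) / (1 / u1) = u1 / u3" "(1 / (u3 * M)) * (1 / u1) = u2 * c"
      using nz unfolding M_eq by (simp_all add: field_simps)
    show ?thesis unfolding F_def
      by (simp only: e1) (simp add: theta_one[OF p1] tdiv nz field_simps)
  qed
  have E2: "F (M * u1) = 0"
  proof -
    have e1: "M * u1 / (M * u1) = 1" "u2 * (M * u1) = 1 / (u3 * c)" "M * u2 / (M * u1) = u2 / u1"
      "(1 / u3) / (M * u1) = u2 * c" "(1 / (u3 * M)) * (M * u1) = u1 / u3"
      using nz unfolding M_eq by (simp_all add: field_simps)
    show ?thesis unfolding F_def
      by (simp only: e1) (simp add: theta_one[OF p1] tdiv nz field_simps)
  qed
  have E3: "F (1 / u2) = 0"
  proof -
    have e1: "u1 * (1 / u2) = u1 / u2" "M * u1 / (1 / u2) = 1 / (u3 * c)" "u2 * (1 / u2) = 1"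
      "(1 / u3) / (1 / u2) = u2 / u3" "(1 / (u3 * M)) * (1 / u2) = u1 * c"
      using nz unfolding M_eq by (simp_all add: field_simps)
    show ?thesis unfolding F_def
      by (simp only: e1) (simp add: theta_one[OF p1])
  qed
  have G3: "G (1 / u2) \<noteq> 0"
  proof -
    have e1: "u1 * (1 / u2) = u1 / u2" "M * u1 / (1 / u2) = 1 / (u3 * c)"
      using nz unfolding M_eq by (simp_all add: field_simps)
    show ?thesis unfolding G_def by (simp only: e1) (use g2 g3 in simp)
  qed
  have zer: "F z = 0 \<and> deriv G z \<noteq> 0" if z: "z \<noteq> 0" and Gz: "G z = 0" for z
  proof -
    have Mu: "M * u1 \<noteq> 0" using M0 nz by simp
    have uz: "u1 * z \<noteq> 0" using nz z by simp
    have mz: "M * u1 / z \<noteq> 0" using Mu z by simp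
    have "(G has_field_derivative (deriv (theta p) (u1 * z) * u1) * theta p (M * u1 / z)
          + (deriv (theta p) (M * u1 / z) * (- (M * u1) / (z * z))) * theta p (u1 * z)) (at z)"
      unfolding G_def by (rule DERIV_mult[OF theta_deriv_lin[OF p1 nz(2) z] theta_deriv_inv[OF p1 Mu z]])
    then have dG: "deriv G z = (deriv (theta p) (u1 * z) * u1) * theta p (M * u1 / z)
          + (deriv (theta p) (M * u1 / z) * (- (M * u1) / (z * z))) * theta p (u1 * z)"
      by (rule DERIV_imp_deriv)
    have notboth: "\<not> (theta p (u1 * z) = 0 \<and> theta p (M * u1 / z) = 0)"
    proof
      assume "theta p (u1 * z) = 0 \<and> theta p (M * u1 / z) = 0"
      then obtain k j :: int where k: "u1 * z = p powi k" and j: "M * u1 / z = p powi j"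
        using theta_zero_iff[OF p1 p0 uz] theta_zero_iff[OF p1 p0 mz] by blast
      have "M * u1 * u1 = (u1 * z) * (M * u1 / z)" using z by (simp add: field_simps)
      also have "\<dots> = p powi (k + j)" unfolding k j using p0 by (simp add: power_int_add)
      finally show False using g1 by blast
    qed
    from Gz have "theta p (u1 * z) = 0 \<or> theta p (M * u1 / z) = 0" unfolding G_def by simp
    then show ?thesis
    proof
      assume t: "theta p (u1 * z) = 0"
      then have t2: "theta p (M * u1 / z) \<noteq> 0" using notboth by blast
      have d1: "deriv (theta p) (u1 * z) \<noteq> 0" by (rule theta_simple_zero[OF p1 p0 uz t])
      have "deriv G z \<noteq> 0" unfolding dG using t t2 d1 nz by simp
      moreover have "F z = 0"
      proof -
        obtain k :: int where k: "u1 * z = p powi k" using theta_zero_iff[OF p1 p0 uz] t by blast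
        have "z = p powi k * (1 / u1)" using k nz by (simp add: field_simps)
        moreover have "F (p powi k * (1 / u1)) = 0"
        proof -
          have u1i: "1 / u1 \<noteq> 0" using nz(2) by simp
          show ?thesis by (rule zero_shift[where F = F and m = m, OF p0 mF mnz u1i E1])
        qed
        ultimately show ?thesis by simp
      qed
      ultimately show ?thesis by simp
    next
      assume t: "theta p (M * u1 / z) = 0"
      then have t2: "theta p (u1 * z) \<noteq> 0" using notboth by blast
      have d1: "deriv (theta p) (M * u1 / z) \<noteq> 0" by (rule theta_simple_zero[OF p1 p0 mz t])
      have "deriv G z \<noteq> 0" unfolding dG using t t2 d1 Mu z by simp
      moreover have "F z = 0"
      proof -
        obtain k :: int where k: "M * u1 / z = p powi k" using theta_zero_iff[OF p1 p0 mz] t by blast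
        have pk: "p powi k \<noteq> 0" using p0 by simp
        have "z = M * u1 / p powi k" using k z pk by (simp add: field_simps)
        also have "\<dots> = p powi (- k) * (M * u1)" by (simp add: power_int_minus field_simps)
        finally have zz: "z = p powi (- k) * (M * u1)" .
        have "F (p powi (- k) * (M * u1)) = 0"
          by (rule zero_shift[where F = F and m = m, OF p0 mF mnz Mu E2])
        then show ?thesis using zz by simp
      qed
      ultimately show ?thesis by simp
    qed
  qed
  obtain c0 where c0: "\<And>z. z \<noteq> 0 \<Longrightarrow> F z = c0 * G z"
    using liouville_quasi[OF p Fh Gh zer mF mG mnz] by blast
  have "c0 * G (1 / u2) = 0" using c0[of "1 / u2"] E3 nz by simp
  then have "c0 = 0" using G3 by simp
  then have "F w = 0" using c0[OF w] by simp
  then show ?thesis unfolding F_def .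
qed

definition Rexp :: "complex \<Rightarrow> complex \<Rightarrow> complex \<Rightarrow> complex \<Rightarrow> complex \<Rightarrow> complex \<Rightarrow> complex \<Rightarrow> complex" where
  "Rexp p c u1 u2 u3 M w = theta p (u2 / u3) * theta p (u1 * w) * theta p (u1 * c) * theta p (M * u1 / w)
       - (u1 / u2) * theta p (u1 / u3) * theta p (u2 * w) * theta p (u2 * c) * theta p (M * u2 / w)
       - theta p (u1 / u2) * theta p ((1 / u3) / w) * theta p (1 / (u3 * c)) * theta p ((1 / (u3 * M)) * w)"

lemma Rexp_p0:
  assumes nz: "c \<noteq> 0" "u1 \<noteq> 0" "u2 \<noteq> 0" "u3 \<noteq> 0" "w \<noteq> 0"
    and hM: "M * u1 * u2 * u3 * c = 1"
  shows "Rexp 0 c u1 u2 u3 M w = 0"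
proof -
  have M_eq: "M = 1 / (u1 * u2 * u3 * c)" using hM nz by (simp add: field_simps)
  show ?thesis unfolding Rexp_def theta_p0 M_eq using nz
    by (simp add: field_simps)
qed

lemma finite_sq: "finite {t :: complex. t * t = a}"
proof (rule finite_subset[of _ "{csqrt a, - csqrt a}"])
  show "{t. t * t = a} \<subseteq> {csqrt a, - csqrt a}"
  proof
    fix t assume "t \<in> {t. t * t = a}"
    then have "t * t = csqrt a * csqrt a" using power2_csqrt[of a] by (simp add: power2_eq_square)
    then show "t \<in> {csqrt a, - csqrt a}" by (simp add: square_eq_iff)
  qed
qed simp

lemma exists_good_near_one:
  fixes B :: "complex set"
  assumes B: "countable B" and d: "d > 0"
  shows "\<exists>r::real. 1 < r \<and> r < 1 + d \<and> complex_of_real r \<notin> B"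
proof (rule ccontr)
  assume "\<not> ?thesis"
  then have "complex_of_real ` {1<..<1 + d} \<subseteq> B" by auto
  then have "countable (complex_of_real ` {1<..<1 + d})" using B countable_subset by blast
  then have "countable {1<..<1 + d}" by (rule countable_image_inj_on) (simp add: inj_on_def)
  moreover have "uncountable {1<..<1 + d}" using d by (simp add: uncountable_open_interval)
  ultimately show False by simp
qed

lemma Rexp_generic:
  assumes p: "0 < norm p" "norm p < 1"
    and nz: "c \<noteq> 0" "u1 \<noteq> 0" "u2 \<noteq> 0" "u3 \<noteq> 0" "w \<noteq> 0"
    and hM: "M * u1 * u2 * u3 * c = 1"
    and g1: "\<forall>k::int. M * u1 * u1 \<noteq> p powi k"
    and g2: "theta p (u1 / u2) \<noteq> 0" and g3: "theta p (1 / (u3 * c)) \<noteq> 0"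
  shows "Rexp p c u1 u2 u3 M w = 0"
  unfolding Rexp_def by (rule R_generic[OF p nz(1-4) hM g1 g2 g3 nz(5)])

lemma Rexp_cont:
  assumes p: "norm p < 1"
    and nz: "c \<noteq> 0" "u1 \<noteq> 0" "u2 \<noteq> 0" "u3 \<noteq> 0" "w \<noteq> 0" "M \<noteq> 0"
  shows "continuous_on (- {0}) (\<lambda>t. Rexp p c (u1 * t) u2 (u3 / t) M w)"
  unfolding Rexp_def
  by (intro continuous_intros theta_cont_comp[OF p]) (use nz in auto)

lemma Rexp_all_pnz:
  assumes p: "0 < norm p" "norm p < 1"
    and nz: "c \<noteq> 0" "u1 \<noteq> 0" "u2 \<noteq> 0" "u3 \<noteq> 0" "w \<noteq> 0"
    and hM: "M * u1 * u2 * u3 * c = 1"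
  shows "Rexp p c u1 u2 u3 M w = 0"
proof (rule ccontr)
  assume ne: "Rexp p c u1 u2 u3 M w \<noteq> 0"
  have p0: "p \<noteq> 0" using p by auto
  have M0: "M \<noteq> 0" using hM by auto
  define E where "E = (\<lambda>t. Rexp p c (u1 * t) u2 (u3 / t) M w)"
  have "continuous_on (- {0}) E" unfolding E_def by (rule Rexp_cont[OF p(2) nz M0])
  then have "\<forall>x\<in>- {0}. isCont E x" by (simp add: continuous_on_eq_continuous_at[OF open_nz])
  then have "isCont E 1" by simp
  then have "(E \<longlongrightarrow> E 1) (at 1)" by (simp add: isCont_def)
  moreover have "E 1 \<noteq> 0" unfolding E_def using ne by simp
  ultimately have "eventually (\<lambda>t. E t \<noteq> 0) (at 1)" by (rule tendsto_imp_eventually_ne)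
  then obtain d where d: "d > 0" "\<And>t. t \<noteq> 1 \<Longrightarrow> dist t 1 < d \<Longrightarrow> E t \<noteq> 0"
    using eventually_ball by blast
  define B where "B = {0} \<union> (\<Union>k::int. {t. t * t = p powi k / (M * u1 * u1)})
      \<union> range (\<lambda>k::int. p powi k * u2 / u1) \<union> range (\<lambda>k::int. p powi k * (u3 * c))"
  have "countable B" unfolding B_def
    by (intro countable_Un countable_UN countable_image countable_finite[OF finite_sq]) auto
  then obtain r :: real where r: "1 < r" "r < 1 + d" "complex_of_real r \<notin> B"
    using exists_good_near_one[OF _ d(1)] by blast
  define t where "t = complex_of_real r"
  have t0: "t \<noteq> 0" using r unfolding t_def B_def by auto
  have t1: "t \<noteq> 1" using r unfolding t_def by auto
  have dt: "dist t 1 < d"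
  proof -
    have "t - 1 = complex_of_real (r - 1)" unfolding t_def by simp
    then have "norm (t - 1) = r - 1" using r(1) by (simp only: norm_of_real)
    then show ?thesis using r(2) by (simp add: dist_norm)
  qed
  have g1: "\<forall>k::int. M * (u1 * t) * (u1 * t) \<noteq> p powi k"
  proof
    fix k :: int
    show "M * (u1 * t) * (u1 * t) \<noteq> p powi k"
    proof
      assume "M * (u1 * t) * (u1 * t) = p powi k"
      then have "t * t = p powi k / (M * u1 * u1)" using M0 nz by (simp add: field_simps)
      then have "t \<in> B" unfolding B_def by blast
      then show False using r unfolding t_def by simp
    qed
  qed
  have g2: "theta p (u1 * t / u2) \<noteq> 0"
  proof
    assume "theta p (u1 * t / u2) = 0"
    then obtain k :: int where "u1 * t / u2 = p powi k"
      using theta_zero_iff[OF p(2) p0] nz t0 by auto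
    then have "t = p powi k * u2 / u1" using nz by (simp add: field_simps)
    then have "t \<in> B" unfolding B_def by blast
    then show False using r unfolding t_def by simp
  qed
  have g3: "theta p (1 / (u3 / t * c)) \<noteq> 0"
  proof
    assume "theta p (1 / (u3 / t * c)) = 0"
    then obtain k :: int where "1 / (u3 / t * c) = p powi k"
      using theta_zero_iff[OF p(2) p0] nz t0 by auto
    then have "t = p powi k * (u3 * c)" using nz t0 by (simp add: field_simps)
    then have "t \<in> B" unfolding B_def by blast
    then show False using r unfolding t_def by simp
  qed
  have hM': "M * (u1 * t) * u2 * (u3 / t) * c = 1" using hM t0 by (simp add: field_simps)
  have "E t = 0" unfolding E_def
    by (rule Rexp_generic[OF p nz(1) _ nz(3) _ nz(5) hM' g1 g2 g3]) (use nz t0 in auto)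
  moreover have "E t \<noteq> 0" using d(2)[OF t1 dt] .
  ultimately show False by simp
qed

lemma Rexp_all:
  assumes p: "norm p < 1"
    and nz: "c \<noteq> 0" "u1 \<noteq> 0" "u2 \<noteq> 0" "u3 \<noteq> 0" "w \<noteq> 0"
    and hM: "M * u1 * u2 * u3 * c = 1"
  shows "Rexp p c u1 u2 u3 M w = 0"
proof (cases "p = 0")
  case True
  then show ?thesis using Rexp_p0[OF nz hM] by simp
next
  case False
  then show ?thesis using Rexp_all_pnz[OF _ p nz hM] by simp
qed

lemma R3:
  fixes p b c d u1 u2 u3 :: complex
  assumes p: "norm p < 1"
    and nz: "b \<noteq> 0" "c \<noteq> 0" "d \<noteq> 0" "u1 \<noteq> 0" "u2 \<noteq> 0" "u3 \<noteq> 0"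
    and h: "u1 * u2 * u3 * (b * c * d) = 1"
  shows "theta p (u2 / u3) * (theta p (u1 * b) * theta p (u1 * c) * theta p (u1 * d))
       = (u1 / u2) * theta p (u1 / u3) * (theta p (u2 * b) * theta p (u2 * c) * theta p (u2 * d))
         + theta p (u1 / u2) * (theta p (1 / (u3 * b)) * theta p (1 / (u3 * c)) * theta p (1 / (u3 * d)))"
proof -
  have hM: "(b * d) * u1 * u2 * u3 * c = 1" using h by (simp add: ac_simps)
  have "Rexp p c u1 u2 u3 (b * d) b = 0" by (rule Rexp_all[OF p nz(2,4,5,6,1) hM])
  moreover have e: "b * d * u1 / b = u1 * d" "b * d * u2 / b = u2 * d" "1 / u3 / b = 1 / (u3 * b)"
    "1 / (u3 * (b * d)) * b = 1 / (u3 * d)"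
    using nz by (simp_all add: field_simps)
  ultimately show ?thesis unfolding Rexp_def e by (simp add: algebra_simps)
qed

lemma eshift_0 [simp]: "eshift p q x 0 = 1" by (simp add: eshift_def)

lemma eshift_Suc: "eshift p q x (Suc k) = eshift p q x k * theta p (x * q ^ k)"
  by (simp add: eshift_def)

lemma mat_chain_step:
  fixes P :: "nat \<Rightarrow> nat \<Rightarrow> nat \<Rightarrow> complex" and \<alpha> \<beta> :: "nat \<Rightarrow> nat \<Rightarrow> complex"
  assumes H1: "\<And>j k. j < n \<Longrightarrow> k < n \<Longrightarrow> k \<le> m \<Longrightarrow> P (Suc m) j k = P m j k"
    and H2: "\<And>j k. j < n \<Longrightarrow> k < n \<Longrightarrow> m < k \<Longrightarrow> P (Suc m) j k = \<alpha> m k * P m j k + \<beta> m k * P m j (k - 1)"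
  shows "det (mat n n (\<lambda>(j, k). P (Suc m) j k)) = det (mat n n (\<lambda>(j, k). P m j k)) * (\<Prod>k\<in>{m<..<n}. \<alpha> m k)"
proof -
  define A where "A = mat n n (\<lambda>(j, k). P m j k)"
  define U where "U = mat n n (\<lambda>(i, k). if k \<le> m then (if i = k then 1 else 0)
     else (if i = k then \<alpha> m k else if Suc i = k then \<beta> m k else 0))"
  have A: "A \<in> carrier_mat n n" and U: "U \<in> carrier_mat n n" unfolding A_def U_def by auto
  have eq: "mat n n (\<lambda>(j, k). P (Suc m) j k) = A * U"
  proof (rule eq_matI)
    fix j k assume j: "j < dim_row (A * U)" and k: "k < dim_col (A * U)"
    then have j: "j < n" and k: "k < n" using A U by auto
    have "(A * U) $$ (j, k) = (\<Sum>i\<in>{0..<n}. A $$ (j, i) * U $$ (i, k))"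
      using j k A U by (simp add: scalar_prod_def)
    also have "\<dots> = P (Suc m) j k"
    proof (cases "k \<le> m")
      case True
      have "(\<Sum>i\<in>{0..<n}. A $$ (j, i) * U $$ (i, k)) = (\<Sum>i\<in>{0..<n}. if i = k then P m j k else 0)"
        by (rule sum.cong) (use j k True in \<open>auto simp: A_def U_def\<close>)
      also have "\<dots> = P m j k" using k by simp
      finally show ?thesis using H1[OF j k True] by simp
    next
      case False
      then have k1: "k - 1 < n" "k - 1 \<noteq> k" "Suc (k - 1) = k" using k by auto
      have "(\<Sum>i\<in>{0..<n}. A $$ (j, i) * U $$ (i, k))
          = (\<Sum>i\<in>{0..<n}. (if i = k then \<alpha> m k * P m j k else 0) + (if i = k - 1 then \<beta> m k * P m j (k - 1) else 0))"
      proof (rule sum.cong)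
        fix i assume i: "i \<in> {0..<n}"
        show "A $$ (j, i) * U $$ (i, k) = (if i = k then \<alpha> m k * P m j k else 0) + (if i = k - 1 then \<beta> m k * P m j (k - 1) else 0)"
        proof (cases "i = k")
          case True
          then show ?thesis using i j k False k1 by (simp add: A_def U_def)
        next
          case ik: False
          show ?thesis
          proof (cases "i = k - 1")
            case True
            then show ?thesis using i j k False k1 ik by (simp add: A_def U_def)
          next
            case False
            then have "Suc i \<noteq> k" using k1 by auto
            then show ?thesis using i j k \<open>\<not> k \<le> m\<close> ik False by (simp add: A_def U_def)
          qed
        qed
      qed simp
      also have "\<dots> = \<alpha> m k * P m j k + \<beta> m k * P m j (k - 1)"
        using k k1 by (simp add: sum.distrib)
      finally show ?thesis using H2[OF j k] False by simp
    qed
    finally show "mat n n (\<lambda>(j, k). P (Suc m) j k) $$ (j, k) = (A * U) $$ (j, k)" using j k by simp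
  qed (use A U in auto)
  have ut: "upper_triangular U"
    unfolding upper_triangular_def U_def by auto
  have "det U = prod_list (diag_mat U)" by (rule det_upper_triangular[OF ut U])
  also have "\<dots> = (\<Prod>k\<in>{0..<n}. U $$ (k, k))" using U by (simp add: prod_list_diag_prod)
  also have "\<dots> = (\<Prod>k\<in>{0..<n}. if k \<le> m then 1 else \<alpha> m k)"
    by (rule prod.cong) (auto simp: U_def)
  also have "\<dots> = (\<Prod>k\<in>{m<..<n}. \<alpha> m k)"
  proof -
    have "(\<Prod>k\<in>{0..<n}. if k \<le> m then 1 else \<alpha> m k) = (\<Prod>k\<in>{0..<n} \<inter> - {k. k \<le> m}. \<alpha> m k)"
      by (simp add: prod.If_cases)
    also have "{0..<n} \<inter> - {k. k \<le> m} = {m<..<n}" by auto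
    finally show ?thesis .
  qed
  finally have dU: "det U = (\<Prod>k\<in>{m<..<n}. \<alpha> m k)" .
  have "det (mat n n (\<lambda>(j, k). P (Suc m) j k)) = det (A * U)" by (simp only: eq)
  also have "\<dots> = det A * det U" by (rule det_mult[OF A U])
  also have "\<dots> = det A * (\<Prod>k\<in>{m<..<n}. \<alpha> m k)" by (simp only: dU)
  finally show ?thesis unfolding A_def .
qed

lemma mat_chain:
  fixes P :: "nat \<Rightarrow> nat \<Rightarrow> nat \<Rightarrow> complex" and \<alpha> \<beta> :: "nat \<Rightarrow> nat \<Rightarrow> complex"
  assumes H1: "\<And>m j k. j < n \<Longrightarrow> k < n \<Longrightarrow> k \<le> m \<Longrightarrow> P (Suc m) j k = P m j k"
    and H2: "\<And>m j k. j < n \<Longrightarrow> k < n \<Longrightarrow> m < k \<Longrightarrow> P (Suc m) j k = \<alpha> m k * P m j k + \<beta> m k * P m j (k - 1)"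
  shows "det (mat n n (\<lambda>(j, k). P M j k)) = det (mat n n (\<lambda>(j, k). P 0 j k)) * (\<Prod>m<M. \<Prod>k\<in>{m<..<n}. \<alpha> m k)"
proof (induction M)
  case 0
  then show ?case by simp
next
  case (Suc M)
  have "det (mat n n (\<lambda>(j, k). P (Suc M) j k)) = det (mat n n (\<lambda>(j, k). P M j k)) * (\<Prod>k\<in>{M<..<n}. \<alpha> M k)"
    by (rule mat_chain_step[where \<beta> = \<beta>]) (use H1 H2 in auto)
  then show ?case using Suc.IH by (simp add: mult.assoc)
qed

definition E1 :: "complex \<Rightarrow> complex \<Rightarrow> complex \<Rightarrow> complex \<Rightarrow> nat \<Rightarrow> nat \<Rightarrow> complex" where
  "E1 p q s x m k = eshift p q x (min m k) * eshift p q (x * s) (k - min m k)"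

lemma alg_entry:
  fixes T23 T12 A Q1 Q2 Q3 C D' :: complex
  assumes "T23 * Q1 = A * Q2 + T12 * Q3" "T23 \<noteq> 0" "D' \<noteq> 0" "Q3 \<noteq> 0"
  shows "C * Q1 / (D' * Q3) = (A / T23) * (C * Q2 / (D' * Q3)) + (T12 / T23) * (C / D')"
proof -
  have "Q1 = (A * Q2 + T12 * Q3) / T23" using assms(1,2) by (simp add: field_simps)
  then show ?thesis using assms(2-4) by (simp add: field_simps)
qed

lemma E1_Suc:
  assumes "m < k"
  shows "E1 p q s x (Suc m) k = eshift p q x m * eshift p q (x * s) (k - 1 - m) * theta p (x * q ^ m)"
proof -
  have "min (Suc m) k = Suc m" "k - Suc m = k - 1 - m" using assms by auto
  then show ?thesis unfolding E1_def by (simp add: eshift_Suc ac_simps)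
qed

lemma E1_m:
  assumes "m < k"
  shows "E1 p q s x m k = eshift p q x m * eshift p q (x * s) (k - 1 - m) * theta p (x * s * q ^ (k - 1 - m))"
proof -
  have "min m k = m" "k - m = Suc (k - 1 - m)" using assms by auto
  then show ?thesis unfolding E1_def by (simp add: eshift_Suc ac_simps)
qed

lemma E1_m1:
  assumes "m < k"
  shows "E1 p q s x m (k - 1) = eshift p q x m * eshift p q (x * s) (k - 1 - m)"
proof -
  have "min m (k - 1) = m" using assms by auto
  then show ?thesis unfolding E1_def by simp
qed

lemma E1_low:
  assumes "k \<le> m"
  shows "E1 p q s x (Suc m) k = E1 p q s x m k"
proof -
  have "min (Suc m) k = k" "min m k = k" using assms by auto
  then show ?thesis unfolding E1_def by simp
qed

lemma entry_step:
  fixes p q a s x y z :: complex and m k :: nat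
  assumes p: "norm p < 1" and q: "q \<noteq> 0" and a: "a \<noteq> 0" and s: "s \<noteq> 0"
    and nz: "x \<noteq> 0" "y \<noteq> 0" "z \<noteq> 0" and hK: "x * y * z * s = a"
    and mk: "m < k"
    and Dk: "eshift p q (a / x) k * eshift p q (a / y) k * eshift p q (a / z) k \<noteq> 0"
    and T: "theta p (s * a * q ^ (k - 1) * q ^ (k - 1 - m)) \<noteq> 0"
  shows "E1 p q s x (Suc m) k * E1 p q s y (Suc m) k * E1 p q s z (Suc m) k
           / (eshift p q (a / x) k * eshift p q (a / y) k * eshift p q (a / z) k)
       = ((q ^ m / (s * q ^ (k - 1 - m))) * theta p (a * q ^ (k - 1) * q ^ m)
           / theta p (s * a * q ^ (k - 1) * q ^ (k - 1 - m)))
         * (E1 p q s x m k * E1 p q s y m k * E1 p q s z m k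
           / (eshift p q (a / x) k * eshift p q (a / y) k * eshift p q (a / z) k))
       + (theta p (q ^ m / (s * q ^ (k - 1 - m))) / theta p (s * a * q ^ (k - 1) * q ^ (k - 1 - m)))
         * (E1 p q s x m (k - 1) * E1 p q s y m (k - 1) * E1 p q s z m (k - 1)
           / (eshift p q (a / x) (k - 1) * eshift p q (a / y) (k - 1) * eshift p q (a / z) (k - 1)))"
proof -
  define u1 where "u1 = q ^ m"
  define u2 where "u2 = s * q ^ (k - 1 - m)"
  define u3 where "u3 = 1 / (a * q ^ (k - 1))"
  have u0: "u1 \<noteq> 0" "u2 \<noteq> 0" "u3 \<noteq> 0" unfolding u1_def u2_def u3_def using q s a by auto
  have h: "u1 * u2 * u3 * (x * y * z) = 1"
  proof -
    have "q ^ m * q ^ (k - 1 - m) = q ^ (k - 1)" using mk by (simp flip: power_add)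
    then show ?thesis unfolding u1_def u2_def u3_def using hK q a by (simp add: field_simps)
  qed
  have R: "theta p (u2 / u3) * (theta p (u1 * x) * theta p (u1 * y) * theta p (u1 * z))
       = (u1 / u2) * theta p (u1 / u3) * (theta p (u2 * x) * theta p (u2 * y) * theta p (u2 * z))
         + theta p (u1 / u2) * (theta p (1 / (u3 * x)) * theta p (1 / (u3 * y)) * theta p (1 / (u3 * z)))"
    by (rule R3[OF p nz u0 h])
  have e: "u2 / u3 = s * a * q ^ (k - 1) * q ^ (k - 1 - m)"
    "u1 / u3 = a * q ^ (k - 1) * q ^ m" "u1 / u2 = q ^ m / (s * q ^ (k - 1 - m))"
    "u1 * x = x * q ^ m" "u1 * y = y * q ^ m" "u1 * z = z * q ^ m"
    "u2 * x = x * s * q ^ (k - 1 - m)" "u2 * y = y * s * q ^ (k - 1 - m)" "u2 * z = z * s * q ^ (k - 1 - m)"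
    "1 / (u3 * x) = a / x * q ^ (k - 1)" "1 / (u3 * y) = a / y * q ^ (k - 1)" "1 / (u3 * z) = a / z * q ^ (k - 1)"
    unfolding u1_def u2_def u3_def using nz q a s by (simp_all add: field_simps)
  note R' = R[unfolded e]
  define Q3 where "Q3 = theta p (a / x * q ^ (k - 1)) * theta p (a / y * q ^ (k - 1)) * theta p (a / z * q ^ (k - 1))"
  define D' where "D' = eshift p q (a / x) (k - 1) * eshift p q (a / y) (k - 1) * eshift p q (a / z) (k - 1)"
  have kS: "k = Suc (k - 1)" using mk by simp
  have Dk': "eshift p q (a / x) k * eshift p q (a / y) k * eshift p q (a / z) k = D' * Q3"
    unfolding D'_def Q3_def by (subst (1 2 3) kS) (simp only: eshift_Suc ac_simps)
  have D0: "D' \<noteq> 0" "Q3 \<noteq> 0" using Dk unfolding Dk' by auto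
  define C where "C = (eshift p q x m * eshift p q (x * s) (k - 1 - m)) * (eshift p q y m * eshift p q (y * s) (k - 1 - m))
     * (eshift p q z m * eshift p q (z * s) (k - 1 - m))"
  have N1: "E1 p q s x (Suc m) k * E1 p q s y (Suc m) k * E1 p q s z (Suc m) k
      = C * (theta p (x * q ^ m) * theta p (y * q ^ m) * theta p (z * q ^ m))"
    unfolding E1_Suc[OF mk] C_def by (simp only: ac_simps)
  have N2: "E1 p q s x m k * E1 p q s y m k * E1 p q s z m k
      = C * (theta p (x * s * q ^ (k - 1 - m)) * theta p (y * s * q ^ (k - 1 - m)) * theta p (z * s * q ^ (k - 1 - m)))"
    unfolding E1_m[OF mk] C_def by (simp only: ac_simps)
  have N3: "E1 p q s x m (k - 1) * E1 p q s y m (k - 1) * E1 p q s z m (k - 1) = C"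
    unfolding E1_m1[OF mk] C_def by (simp only: ac_simps)
  show ?thesis unfolding N1 N2 N3 Dk' D'_def[symmetric]
    by (rule alg_entry[OF R'[folded Q3_def] T D0])
qed

lemma prod_pow_choose: "(\<Prod>k<n. (x::complex) ^ k) = x ^ (n choose 2)"
proof (induction n)
  case 0
  then show ?case by (simp add: numeral_2_eq_2)
next
  case (Suc n)
  have b: "(Suc n choose (Suc (Suc 0))) = (n choose (Suc 0)) + (n choose (Suc (Suc 0)))" by (rule binomial_Suc_Suc)
  have "(Suc n choose 2) = (n choose 2) + n"
    unfolding numeral_2_eq_2 b by simp
  then show ?case using Suc.IH by (simp add: power_add)
qed

lemma prod_rev_lt: "(\<Prod>m<(k::nat). g (k - 1 - m)) = (\<Prod>m<k. (g m :: complex))"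
proof -
  have "(\<Prod>m\<in>{0..<k}. g m) = (\<Prod>m\<in>{0..<k}. g (k + 0 - Suc m))"
    by (rule prod.atLeastLessThan_rev)
  moreover have "\<And>m. k + 0 - Suc m = k - 1 - m" by simp
  ultimately show ?thesis by (simp add: lessThan_atLeast0)
qed

lemma const_prod:
  fixes p q a e s :: complex
  assumes n: "n \<ge> 1" and s: "s \<noteq> 0" and q: "q \<noteq> 0"
  shows "(\<Prod>m<n - 1. \<Prod>k\<in>{m<..<n}. (q ^ m / (s * q ^ (k - 1 - m))) * theta p (a * q ^ (k - 1) * q ^ m)
             / theta p (e * q ^ (k - 1) * q ^ (k - 1 - m)))
       = (1 / s) ^ (n choose 2) * (\<Prod>j\<in>{2..n}. eshift p q (a * q ^ (j - 2)) (j - 1) / eshift p q (e * q ^ (j - 2)) (j - 1))"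
proof -
  define f where "f = (\<lambda>m k. (q ^ m / (s * q ^ (k - 1 - m))) * theta p (a * q ^ (k - 1) * q ^ m)
             / theta p (e * q ^ (k - 1) * q ^ (k - 1 - m)))"
  define g where "g = (\<lambda>k. eshift p q (a * q ^ (k - 1)) k / eshift p q (e * q ^ (k - 1)) k)"
  have sw: "(\<Prod>m<n - 1. \<Prod>k\<in>{m<..<n}. f m k) = (\<Prod>k<n. \<Prod>m<k. f m k)"
  proof -
    have "(\<Prod>i\<in>{..n - 1}. \<Prod>j\<in>{..<i}. f j i) = (\<Prod>j\<in>{..<n - 1}. \<Prod>i\<in>{Suc j..n - 1}. f j i)"
      by (rule prod.nested_swap')
    moreover have "{..n - 1} = {..<n}" using n by auto
    moreover have "\<And>j. {Suc j..n - 1} = {j<..<n}" using n by auto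
    ultimately show ?thesis by simp
  qed
  have pk: "(\<Prod>m<k. f m k) = (1 / s) ^ k * g k" for k
  proof -
    have "(\<Prod>m<k. f m k) = (\<Prod>m<k. q ^ m / (s * q ^ (k - 1 - m)))
         * ((\<Prod>m<k. theta p (a * q ^ (k - 1) * q ^ m)) / (\<Prod>m<k. theta p (e * q ^ (k - 1) * q ^ (k - 1 - m))))"
      unfolding f_def by (simp add: prod.distrib prod_dividef)
    also have "(\<Prod>m<k. q ^ m / (s * q ^ (k - 1 - m))) = (\<Prod>m<k. q ^ m) / (s ^ k * (\<Prod>m<k. q ^ (k - 1 - m)))"
      by (simp add: prod_dividef prod.distrib)
    also have "(\<Prod>m<k. q ^ (k - 1 - m)) = (\<Prod>m<k. q ^ m)"
      by (rule prod_rev_lt[where g = "\<lambda>m. q ^ m"])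
    also have "(\<Prod>m<k. theta p (e * q ^ (k - 1) * q ^ (k - 1 - m))) = (\<Prod>m<k. theta p (e * q ^ (k - 1) * q ^ m))"
      by (rule prod_rev_lt[where g = "\<lambda>m. theta p (e * q ^ (k - 1) * q ^ m)"])
    also have "(\<Prod>m<k. q ^ m) / (s ^ k * (\<Prod>m<k. q ^ m)) = (1 / s) ^ k"
      using q s by (simp add: power_one_over)
    finally show ?thesis unfolding g_def eshift_def by simp
  qed
  have "(\<Prod>k<n. \<Prod>m<k. f m k) = (\<Prod>k<n. (1 / s) ^ k) * (\<Prod>k<n. g k)"
    unfolding pk by (rule prod.distrib)
  also have "(\<Prod>k<n. (1 / s) ^ k) = (1 / s) ^ (n choose 2)" by (rule prod_pow_choose)
  also have "(\<Prod>k<n. g k) = (\<Prod>j\<in>{2..n}. g (j - 1))"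
  proof -
    have "(\<Prod>k<n. g k) = (\<Prod>k\<in>{0..<n}. g k)" by (simp add: lessThan_atLeast0)
    also have "\<dots> = g 0 * (\<Prod>k\<in>{1..<n}. g k)"
      using n by (simp add: prod.atLeast_Suc_lessThan)
    also have "g 0 = 1" unfolding g_def by simp
    also have "(\<Prod>k\<in>{1..<n}. g k) = (\<Prod>j\<in>{2..n}. g (j - 1))"
      by (rule prod.reindex_bij_witness[where i = "\<lambda>j. j - 1" and j = "\<lambda>k. k + 1"]) auto
    finally show ?thesis by simp
  qed
  also have "(\<Prod>j\<in>{2..n}. g (j - 1)) = (\<Prod>j\<in>{2..n}. eshift p q (a * q ^ (j - 2)) (j - 1) / eshift p q (e * q ^ (j - 2)) (j - 1))"
    by (rule prod.cong) (auto simp: g_def numeral_2_eq_2)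
  finally show ?thesis using sw unfolding f_def by simp
qed

theorem theorem1p1:
  fixes p q a :: complex and b c d :: "nat \<Rightarrow> complex" and n :: nat
  assumes hp: "norm p < 1" and hq: "q \<noteq> 0"
    and hn: "n \<ge> 1"
    and ha: "a \<noteq> 0"
    and hb: "\<forall>j<n. b j \<noteq> 0" and hc: "\<forall>j<n. c j \<noteq> 0" and hd: "\<forall>j<n. d j \<noteq> 0"
    and hconst: "\<forall>j<n. b j * c j * d j = b 0 * c 0 * d 0"
    and hden: "\<forall>j<n. \<forall>k<n. eshift p q (a / b j) k * eshift p q (a / c j) k
                                * eshift p q (a / d j) k \<noteq> 0"
    and hden2: "\<forall>j\<in>{2..n}. eshift p q (a ^ 2 / (b 0 * c 0 * d 0) * q ^ (j - 2)) (j - 1) \<noteq> 0"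
  shows "(let e = a ^ 2 / (b 0 * c 0 * d 0) in
     det (mat n n (\<lambda>(j, k).
        (eshift p q (b j) k * eshift p q (c j) k * eshift p q (d j) k) /
        (eshift p q (a / b j) k * eshift p q (a / c j) k * eshift p q (a / d j) k)))
   = (a / e) ^ (n choose 2) *
     (\<Prod>j\<in>{2..n}. eshift p q (a * q ^ (j - 2)) (j - 1) / eshift p q (e * q ^ (j - 2)) (j - 1)) *
     det (mat n n (\<lambda>(j, k).
        (eshift p q (a / (b j * c j)) k * eshift p q (a / (b j * d j)) k * eshift p q (a / (c j * d j)) k) /
        (eshift p q (a / b j) k * eshift p q (a / c j) k * eshift p q (a / d j) k))))"
proof -
  have n0: "0 < n" using hn by simp
  define K where "K = b 0 * c 0 * d 0"
  have K0: "K \<noteq> 0" unfolding K_def using hb hc hd n0 by auto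
  define s where "s = a / K"
  have s0: "s \<noteq> 0" unfolding s_def using ha K0 by simp
  have esa: "a ^ 2 / (b 0 * c 0 * d 0) = s * a" unfolding s_def K_def[symmetric] by (simp add: power2_eq_square)
  have aes: "a / (a ^ 2 / (b 0 * c 0 * d 0)) = 1 / s" unfolding s_def K_def[symmetric] using ha K0
    by (simp add: power2_eq_square field_simps)
  have hKj: "b j * c j * d j = K" if "j < n" for j unfolding K_def by (rule hconst[rule_format, OF that])
  define P where "P = (\<lambda>m j k. E1 p q s (b j) m k * E1 p q s (c j) m k * E1 p q s (d j) m k
      / (eshift p q (a / b j) k * eshift p q (a / c j) k * eshift p q (a / d j) k))"
  define \<alpha> where "\<alpha> = (\<lambda>m k. (q ^ m / (s * q ^ (k - 1 - m))) * theta p (a * q ^ (k - 1) * q ^ m)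
      / theta p (s * a * q ^ (k - 1) * q ^ (k - 1 - m)))"
  define \<beta> where "\<beta> = (\<lambda>m k. theta p (q ^ m / (s * q ^ (k - 1 - m))) / theta p (s * a * q ^ (k - 1) * q ^ (k - 1 - m)))"
  have H1: "P (Suc m) j k = P m j k" if "j < n" "k < n" "k \<le> m" for m j k
    unfolding P_def using E1_low[OF that(3)] by simp
  have H2: "P (Suc m) j k = \<alpha> m k * P m j k + \<beta> m k * P m j (k - 1)" if j: "j < n" and k: "k < n" and mk: "m < k" for m j k
  proof -
    have hK: "b j * c j * d j * s = a" using hKj[OF j] K0 unfolding s_def by simp
    have T: "theta p (s * a * q ^ (k - 1) * q ^ (k - 1 - m)) \<noteq> 0"
    proof -
      have "Suc k \<in> {2..n}" using k mk by auto
      then have "eshift p q (a ^ 2 / (b 0 * c 0 * d 0) * q ^ (Suc k - 2)) (Suc k - 1) \<noteq> 0" using hden2 by blast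
      moreover have "Suc k - 2 = k - 1" "Suc k - 1 = k" by auto
      ultimately have "eshift p q (s * a * q ^ (k - 1)) k \<noteq> 0" unfolding esa by simp
      then have "(\<Prod>i<k. theta p (s * a * q ^ (k - 1) * q ^ i)) \<noteq> 0" unfolding eshift_def .
      moreover have "k - 1 - m \<in> {..<k}" using mk by auto
      ultimately show ?thesis by (simp add: prod_zero_iff)
    qed
    show ?thesis unfolding P_def \<alpha>_def \<beta>_def
      by (rule entry_step[OF hp hq ha s0 _ _ _ hK mk _ T]) (use hb hc hd hden j k in auto)
  qed
  have chain: "det (mat n n (\<lambda>(j, k). P (n - 1) j k)) = det (mat n n (\<lambda>(j, k). P 0 j k)) * (\<Prod>m<n - 1. \<Prod>k\<in>{m<..<n}. \<alpha> m k)"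
    by (rule mat_chain[where \<beta> = \<beta>]) (use H1 H2 in auto)
  have L: "mat n n (\<lambda>(j, k).
        (eshift p q (b j) k * eshift p q (c j) k * eshift p q (d j) k) /
        (eshift p q (a / b j) k * eshift p q (a / c j) k * eshift p q (a / d j) k)) = mat n n (\<lambda>(j, k). P (n - 1) j k)"
  proof (rule cong_mat)
    fix j k assume "j < n" "k < n"
    then have "min (n - 1) k = k" by auto
    then show "(case (j, k) of (j, k) \<Rightarrow> (eshift p q (b j) k * eshift p q (c j) k * eshift p q (d j) k) /
        (eshift p q (a / b j) k * eshift p q (a / c j) k * eshift p q (a / d j) k)) = (case (j, k) of (j, k) \<Rightarrow> P (n - 1) j k)"
      unfolding P_def E1_def by simp
  qed auto
  have R: "mat n n (\<lambda>(j, k).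
        (eshift p q (a / (b j * c j)) k * eshift p q (a / (b j * d j)) k * eshift p q (a / (c j * d j)) k) /
        (eshift p q (a / b j) k * eshift p q (a / c j) k * eshift p q (a / d j) k)) = mat n n (\<lambda>(j, k). P 0 j k)"
  proof (rule cong_mat)
    fix j k assume j: "j < n" and "k < n"
    have e: "a / (b j * c j) = d j * s" "a / (b j * d j) = c j * s" "a / (c j * d j) = b j * s"
      using hKj[OF j] hb hc hd j K0 unfolding s_def by (auto simp: field_simps)
    show "(case (j, k) of (j, k) \<Rightarrow> (eshift p q (a / (b j * c j)) k * eshift p q (a / (b j * d j)) k * eshift p q (a / (c j * d j)) k) /
        (eshift p q (a / b j) k * eshift p q (a / c j) k * eshift p q (a / d j) k)) = (case (j, k) of (j, k) \<Rightarrow> P 0 j k)"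
      unfolding prod.case P_def E1_def e by (simp add: ac_simps)
  qed auto
  have C: "(\<Prod>m<n - 1. \<Prod>k\<in>{m<..<n}. \<alpha> m k)
      = (1 / s) ^ (n choose 2) * (\<Prod>j\<in>{2..n}. eshift p q (a * q ^ (j - 2)) (j - 1) / eshift p q (s * a * q ^ (j - 2)) (j - 1))"
    unfolding \<alpha>_def by (rule const_prod[OF hn s0 hq])
  show ?thesis unfolding Let_def L R chain C esa aes using ha by (simp add: ac_simps)
qed

end
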